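(* Let $m \geq 0$, $n \geq 1$ be integers. For a sorted configuration $c = (c^t; c^b)$ on $K_{m,n}^0$, let $k = (k_1,\ldots,k_n)$ with $k_j := |\{ i \in \{1,\ldots,m\} : c^t_i < j\}|$, and define $\Psi(c) := \big(F(k), F(c^b)\big)$. Then $\Psi$ is a bijection from the set of sorted stochastically recurrent configurations on $K_{m,n}^0$ to the set of compatible pairs $(F, F')$ with $F \in \mathrm{Ferrers}_{m,n}$ and $F' \in \mathrm{Ferrers}_{\leq m, n}$. Moreover, for such $c$, $\mathrm{level}(c) = \mathrm{Area}(F(c^b)) - \mathrm{Area}(F(k))$, and this is also the number of $\mathsf{Add}$ operations in any sequence of legal $\mathsf{Shift}$ and $\mathsf{Add}$ operations transforming $F(k)$ into $F(c^b)$.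
   Context: $K_{m,n}^0$ is the complete bipartite graph with "top" vertices $v^t_0, v^t_1, \ldots, v^t_m$ and "bottom" vertices $v^b_1, \ldots, v^b_n$, with an edge between every top vertex and every bottom vertex; $v^t_0$ is the sink. A configuration is a vector $c = (c^t_1, \ldots, c^t_m; c^b_1, \ldots, c^b_n)$ of non-negative integers ($c^*_i$ = number of grains at $v^*_i$); it is sorted if $c^t$ and $c^b$ are both weakly increasing. $c$ is stable if $c^t_i < n$ for all $i$ and $c^b_j < m+1$ for all $j$. Stochastic sandpile model (SSM) with a fixed parameter $p \in (0,1)$: an unstable vertex topples as follows: for each of its neighbours (for a bottom vertex this includes the sink), independently (and independently of all previous topplings), with probability $p$ it sends one grain to that neighbour, and otherwise keeps it; grains sent to the sink disappear. Repeated toppling from any configuration reaches a random stable configuration whose law does not depend on toppling order. In the Markov chain on stable configurations which at each step adds a grain to a uniformly random non-sink vertex and stabilises by the SSM, a stable configuration is stochastically recurrent if it is a recurrent state (appears infinitely often). The level is $\mathrm{level}(c) := \sum_i c^t_i + \sum_j c^b_j - mn$. A Ferrers diagram with $n$ rows is a left-aligned collection of cells in $n$ rows (ordered bottom to top, rows may be empty) whose row lengths are weakly increasing from bottom to top; for a weakly increasing $s = (s_1,\ldots,s_n)$ of non-negative integers, $F(s)$ is the Ferrers diagram with $s_i$ cells in row $i$. Its number of columns is $s_n$. $\mathrm{Ferrers}_{m,n}$ (resp. $\mathrm{Ferrers}_{\leq m,n}$) is the set of Ferrers diagrams with $n$ rows and exactly $m$ (resp. at most $m$) columns. $\mathrm{Area}(F)$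 is the number of cells. Operations on $F(s)$: $\mathsf{Shift}$ moves one cell from a row $p$ to a row $p' < p$ (i.e. $s_p \mapsto s_p - 1$, $s_{p'} \mapsto s_{p'} + 1$); $\mathsf{Add}$ adds a cell at the right of a row $p$ ($s_p \mapsto s_p + 1$). An operation is legal if the result is again a Ferrers diagram (the number of columns may change). An ordered pair $(F, F')$ is compatible if $F'$ can be obtained from $F$ by a finite sequence of legal $\mathsf{Shift}$ and $\mathsf{Add}$ operations. *)

theory Defs
  imports Complex_Main
begin

text \<open>A configuration is a pair (ct, cb) of lists: ct ! (i-1) is the number of grains
  on the top vertex v^t_i (i = 1..m), cb ! (j-1) the number on the bottom vertex v^b_j
  (j = 1..n). The sink v^t_0 carries no grains.\<close>

type_synonym config = "nat list \<times> nat list"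

definition is_config :: "nat \<Rightarrow> nat \<Rightarrow> config \<Rightarrow> bool" where
  "is_config m n c \<longleftrightarrow> length (fst c) = m \<and> length (snd c) = n"

definition sorted_config :: "config \<Rightarrow> bool" where
  "sorted_config c \<longleftrightarrow> sorted (fst c) \<and> sorted (snd c)"

definition stable :: "nat \<Rightarrow> nat \<Rightarrow> config \<Rightarrow> bool" where
  "stable m n c \<longleftrightarrow> (\<forall>i<m. fst c ! i < n) \<and> (\<forall>j<n. snd c ! j < m + 1)"

definition level :: "nat \<Rightarrow> nat \<Rightarrow> config \<Rightarrow> int" where
  "level m n c = int (sum_list (fst c)) + int (sum_list (snd c)) - int (m * n)"

text \<open>Toppling of top vertex v^t_{i+1}: it sends one grain to each bottom vertex
  with index (0-based) in S (its neighbours are exactly the n bottom vertices).\<close>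
definition topple_top :: "nat \<Rightarrow> nat \<Rightarrow> nat set \<Rightarrow> config \<Rightarrow> config" where
  "topple_top n i S c =
     ((fst c)[i := fst c ! i - card S],
      map (\<lambda>j. snd c ! j + (if j \<in> S then 1 else 0)) [0..<n])"

text \<open>Toppling of bottom vertex v^b_{j+1}: it sends one grain to each top vertex
  with (0-based) index in S and, if ks, one grain to the sink (which disappears).\<close>
definition topple_bot :: "nat \<Rightarrow> nat \<Rightarrow> nat set \<Rightarrow> bool \<Rightarrow> config \<Rightarrow> config" where
  "topple_bot m j S ks c =
     (map (\<lambda>i. fst c ! i + (if i \<in> S then 1 else 0)) [0..<m],
      (snd c)[j := snd c ! j - card S - (if ks then 1 else 0)])"

text \<open>One SSM toppling step with positive probability: an unstable vertex topples and the
  set of neighbours receiving a grain has probability p^(#sent) (1-p)^(#kept) > 0.\<close>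
definition ssm_step :: "real \<Rightarrow> nat \<Rightarrow> nat \<Rightarrow> config \<Rightarrow> config \<Rightarrow> bool" where
  "ssm_step p m n c c' \<longleftrightarrow>
     (\<exists>i<m. n \<le> fst c ! i \<and>
        (\<exists>S. S \<subseteq> {..<n} \<and> p ^ card S * (1 - p) ^ (n - card S) > 0 \<and>
             c' = topple_top n i S c)) \<or>
     (\<exists>j<n. m + 1 \<le> snd c ! j \<and>
        (\<exists>S ks. S \<subseteq> {..<m} \<and>
             p ^ (card S + (if ks then 1 else 0)) *
               (1 - p) ^ (m + 1 - card S - (if ks then 1 else 0)) > 0 \<and>
             c' = topple_bot m j S ks c))"

text \<open>d is in the support of the (random) stabilisation of c under the SSM.\<close>
definition ssm_stabilises_to :: "real \<Rightarrow> nat \<Rightarrow> nat \<Rightarrow> config \<Rightarrow> config \<Rightarrow> bool" where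
  "ssm_stabilises_to p m n c d \<longleftrightarrow> (ssm_step p m n)\<^sup>*\<^sup>* c d \<and> stable m n d"

definition add_top :: "nat \<Rightarrow> config \<Rightarrow> config" where
  "add_top i c = ((fst c)[i := fst c ! i + 1], snd c)"

definition add_bot :: "nat \<Rightarrow> config \<Rightarrow> config" where
  "add_bot j c = (fst c, (snd c)[j := snd c ! j + 1])"

text \<open>Positive-probability transitions of the Markov chain on stable configurations:
  add a grain to a (uniformly random) non-sink vertex and stabilise by the SSM.\<close>
definition chain_step :: "real \<Rightarrow> nat \<Rightarrow> nat \<Rightarrow> config \<Rightarrow> config \<Rightarrow> bool" where
  "chain_step p m n c d \<longleftrightarrow> is_config m n c \<and> stable m n c \<and>
     ((\<exists>i<m. ssm_stabilises_to p m n (add_top i c) d) \<or>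
      (\<exists>j<n. ssm_stabilises_to p m n (add_bot j c) d))"

text \<open>Recurrent state of this finite-state Markov chain: every state reachable from c
  (with positive probability) leads back to c.\<close>
definition stoch_recurrent :: "real \<Rightarrow> nat \<Rightarrow> nat \<Rightarrow> config \<Rightarrow> bool" where
  "stoch_recurrent p m n c \<longleftrightarrow> is_config m n c \<and> stable m n c \<and>
     (\<forall>d. (chain_step p m n)\<^sup>*\<^sup>* c d \<longrightarrow> (chain_step p m n)\<^sup>*\<^sup>* d c)"

text \<open>A Ferrers diagram with n rows is represented by its row-length list s
  (s ! (i-1) = s_i, rows bottom to top), weakly increasing.\<close>

definition Ferrers_eq :: "nat \<Rightarrow> nat \<Rightarrow> nat list set" where
  "Ferrers_eq m n = {s. length s = n \<and> sorted s \<and> last s = m}"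

definition Ferrers_le :: "nat \<Rightarrow> nat \<Rightarrow> nat list set" where
  "Ferrers_le m n = {s. length s = n \<and> sorted s \<and> last s \<le> m}"

definition area :: "nat list \<Rightarrow> nat" where
  "area s = sum_list s"

datatype ferrers_op = Shift nat nat | Add nat

fun apply_op :: "ferrers_op \<Rightarrow> nat list \<Rightarrow> nat list" where
  "apply_op (Shift q r) s = (s[q := s ! q - 1])[r := (s[q := s ! q - 1]) ! r + 1]"
| "apply_op (Add q) s = s[q := s ! q + 1]"

fun legal_op :: "ferrers_op \<Rightarrow> nat list \<Rightarrow> bool" where
  "legal_op (Shift q r) s \<longleftrightarrow> q < length s \<and> r < q \<and> 0 < s ! q \<and> sorted (apply_op (Shift q r) s)"
| "legal_op (Add q) s \<longleftrightarrow> q < length s \<and> sorted (apply_op (Add q) s)"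

fun ops_path :: "nat list \<Rightarrow> ferrers_op list \<Rightarrow> nat list \<Rightarrow> bool" where
  "ops_path s [] t \<longleftrightarrow> s = t"
| "ops_path s (op1 # os) t \<longleftrightarrow> legal_op op1 s \<and> ops_path (apply_op op1 s) os t"

definition compatible :: "nat list \<Rightarrow> nat list \<Rightarrow> bool" where
  "compatible F F' \<longleftrightarrow> (\<exists>ops. ops_path F ops F')"

fun is_add :: "ferrers_op \<Rightarrow> bool" where
  "is_add (Add _) = True"
| "is_add (Shift _ _) = False"

definition num_adds :: "ferrers_op list \<Rightarrow> nat" where
  "num_adds ops = length (filter is_add ops)"

definition kvec :: "nat \<Rightarrow> nat \<Rightarrow> config \<Rightarrow> nat list" where
  "kvec m n c = map (\<lambda>j. card {i. i < m \<and> fst c ! i < j}) [1..<n+1]"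

definition Psi :: "nat \<Rightarrow> nat \<Rightarrow> config \<Rightarrow> nat list \<times> nat list" where
  "Psi m n c = (kvec m n c, snd c)"

end

theory Submission
  imports Defs
begin


lemma nth_upd: "xs[i := v] ! k = (if k = i \<and> i < length xs then v else xs ! k)"
  by (cases "k = i"; cases "i < length xs") (auto simp: list_update_beyond)

lemma ssm_bot: "0 < p \<Longrightarrow> p < 1 \<Longrightarrow> j < n \<Longrightarrow> m + 1 \<le> snd c ! j \<Longrightarrow> S \<subseteq> {..<m} \<Longrightarrow>
   ssm_step p m n c (topple_bot m j S ks c)"
  unfolding ssm_step_def by (intro disjI2 exI[of _ j] conjI exI[of _ S] exI[of _ ks]) auto

lemma ssm_top: "0 < p \<Longrightarrow> p < 1 \<Longrightarrow> i < m \<Longrightarrow> n \<le> fst c ! i \<Longrightarrow> S \<subseteq> {..<n} \<Longrightarrow>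
   ssm_step p m n c (topple_top n i S c)"
  unfolding ssm_step_def by (intro disjI1 exI[of _ i] conjI exI[of _ S]) auto

definition PP :: "nat \<Rightarrow> nat \<Rightarrow> config \<Rightarrow> bool" where
  "PP m n c \<longleftrightarrow> (\<forall>T B. T \<subseteq> {..<m} \<longrightarrow> B \<subseteq> {..<n} \<longrightarrow>
      card T * card B \<le> (\<Sum>i\<in>T. fst c ! i) + (\<Sum>j\<in>B. snd c ! j))"

lemma PPD: "PP m n c \<Longrightarrow> T \<subseteq> {..<m} \<Longrightarrow> B \<subseteq> {..<n} \<Longrightarrow>
   card T * card B \<le> (\<Sum>i\<in>T. fst c ! i) + (\<Sum>j\<in>B. snd c ! j)"
  by (simp add: PP_def)

lemma PP_topple_top:
  assumes P: "PP m n c" and cf: "is_config m n c" and i: "i < m" and big: "n \<le> fst c ! i"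
    and S: "S \<subseteq> {..<n}"
  shows "PP m n (topple_top n i S c)"
  unfolding PP_def
proof (intro allI impI)
  fix T B assume T: "T \<subseteq> {..<m}" and B: "B \<subseteq> {..<n}"
  have fT: "finite T" using T finite_subset by blast
  have fB: "finite B" using B finite_subset by blast
  have fS: "finite S" using S finite_subset by blast
  have cS: "card S \<le> n" using S card_mono[of "{..<n}" S] by auto
  have li: "i < length (fst c)" using cf i by (simp add: is_config_def)
  have snd_new: "(\<Sum>j\<in>B. snd (topple_top n i S c) ! j) = (\<Sum>j\<in>B. snd c ! j) + card (B \<inter> S)"
  proof -
    have "(\<Sum>j\<in>B. snd (topple_top n i S c) ! j) = (\<Sum>j\<in>B. snd c ! j + (if j \<in> S then 1 else 0))"
      by (rule sum.cong) (use B in \<open>auto simp: topple_top_def\<close>)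
    also have "\<dots> = (\<Sum>j\<in>B. snd c ! j) + (\<Sum>j\<in>B. if j \<in> S then 1 else 0)"
      by (simp add: sum.distrib)
    also have "(\<Sum>j\<in>B. if j \<in> S then 1 else (0::nat)) = card (B \<inter> S)"
      using fB by (simp add: sum.If_cases Int_def)
    finally show ?thesis .
  qed
  show "card T * card B \<le> (\<Sum>ia\<in>T. fst (topple_top n i S c) ! ia) + (\<Sum>j\<in>B. snd (topple_top n i S c) ! j)"
  proof (cases "i \<in> T")
    case False
    have "(\<Sum>ia\<in>T. fst (topple_top n i S c) ! ia) = (\<Sum>ia\<in>T. fst c ! ia)"
    proof (rule sum.cong)
      fix x assume "x \<in> T" hence "i \<noteq> x" using False by auto
      thus "fst (topple_top n i S c) ! x = fst c ! x" by (simp add: topple_top_def)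
    qed simp
    then show ?thesis using PPD[OF P T B] snd_new by linarith
  next
    case True
    have a: "(\<Sum>ia\<in>T. fst (topple_top n i S c) ! ia) = (\<Sum>ia\<in>T-{i}. fst c ! ia) + (fst c ! i - card S)"
    proof -
      have "(\<Sum>ia\<in>T. fst (topple_top n i S c) ! ia) = fst (topple_top n i S c) ! i + (\<Sum>ia\<in>T-{i}. fst (topple_top n i S c) ! ia)"
        by (rule sum.remove[OF fT True])
      also have "(\<Sum>ia\<in>T-{i}. fst (topple_top n i S c) ! ia) = (\<Sum>ia\<in>T-{i}. fst c ! ia)"
        by (rule sum.cong) (simp_all add: topple_top_def)
      finally show ?thesis using li by (simp add: topple_top_def)
    qed
    have IH: "card (T-{i}) * card B \<le> (\<Sum>ia\<in>T-{i}. fst c ! ia) + (\<Sum>j\<in>B. snd c ! j)"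
      by (rule PPD[OF P]) (use T B in auto)
    have cT: "card T = Suc (card (T - {i}))" using card_Suc_Diff1[OF fT True] by simp
    have un: "card (B \<union> S) \<le> n" using B S card_mono[of "{..<n}" "B \<union> S"] by auto
    have "card (B \<union> S) + card (B \<inter> S) = card B + card S" using card_Un_Int[OF fB fS] by linarith
    hence "card B + card S \<le> n + card (B \<inter> S)" using un by linarith
    moreover have "card T * card B = card B + card (T-{i}) * card B" by (simp only: cT mult_Suc)
    ultimately show ?thesis using a IH snd_new big cS by linarith
  qed
qed

lemma PP_topple_bot:
  assumes P: "PP m n c" and cf: "is_config m n c" and j: "j < n" and big: "m + 1 \<le> snd c ! j"
    and S: "S \<subseteq> {..<m}"
  shows "PP m n (topple_bot m j S ks c)"
  unfolding PP_def
proof (intro allI impI)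
  fix T B assume T: "T \<subseteq> {..<m}" and B: "B \<subseteq> {..<n}"
  have fT: "finite T" using T finite_subset by blast
  have fB: "finite B" using B finite_subset by blast
  have fS: "finite S" using S finite_subset by blast
  have cS: "card S \<le> m" using S card_mono[of "{..<m}" S] by auto
  have lj: "j < length (snd c)" using cf j by (simp add: is_config_def)
  have fst_new: "(\<Sum>i\<in>T. fst (topple_bot m j S ks c) ! i) = (\<Sum>i\<in>T. fst c ! i) + card (T \<inter> S)"
  proof -
    have "(\<Sum>i\<in>T. fst (topple_bot m j S ks c) ! i) = (\<Sum>i\<in>T. fst c ! i + (if i \<in> S then 1 else 0))"
      by (rule sum.cong) (use T in \<open>auto simp: topple_bot_def\<close>)
    also have "\<dots> = (\<Sum>i\<in>T. fst c ! i) + (\<Sum>i\<in>T. if i \<in> S then 1 else 0)"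
      by (simp add: sum.distrib)
    also have "(\<Sum>i\<in>T. if i \<in> S then 1 else (0::nat)) = card (T \<inter> S)"
      using fT by (simp add: sum.If_cases Int_def)
    finally show ?thesis .
  qed
  show "card T * card B \<le> (\<Sum>i\<in>T. fst (topple_bot m j S ks c) ! i) + (\<Sum>ja\<in>B. snd (topple_bot m j S ks c) ! ja)"
  proof (cases "j \<in> B")
    case False
    have "(\<Sum>ja\<in>B. snd (topple_bot m j S ks c) ! ja) = (\<Sum>ja\<in>B. snd c ! ja)"
    proof (rule sum.cong)
      fix x assume "x \<in> B" hence "j \<noteq> x" using False by auto
      thus "snd (topple_bot m j S ks c) ! x = snd c ! x" by (simp add: topple_bot_def)
    qed simp
    then show ?thesis using PPD[OF P T B] fst_new by linarith
  next
    case True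
    have a: "(\<Sum>ja\<in>B. snd (topple_bot m j S ks c) ! ja) = (\<Sum>ja\<in>B-{j}. snd c ! ja) + (snd c ! j - card S - (if ks then 1 else 0))"
    proof -
      have "(\<Sum>ja\<in>B. snd (topple_bot m j S ks c) ! ja) = snd (topple_bot m j S ks c) ! j + (\<Sum>ja\<in>B-{j}. snd (topple_bot m j S ks c) ! ja)"
        by (rule sum.remove[OF fB True])
      also have "(\<Sum>ja\<in>B-{j}. snd (topple_bot m j S ks c) ! ja) = (\<Sum>ja\<in>B-{j}. snd c ! ja)"
        by (rule sum.cong) (simp_all add: topple_bot_def)
      finally show ?thesis using lj by (simp add: topple_bot_def)
    qed
    have IH: "card T * card (B-{j}) \<le> (\<Sum>i\<in>T. fst c ! i) + (\<Sum>ja\<in>B-{j}. snd c ! ja)"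
      by (rule PPD[OF P]) (use T B in auto)
    have cB: "card B = Suc (card (B - {j}))" using card_Suc_Diff1[OF fB True] by simp
    have un: "card (T \<union> S) \<le> m" using T S card_mono[of "{..<m}" "T \<union> S"] by auto
    have "card (T \<union> S) + card (T \<inter> S) = card T + card S" using card_Un_Int[OF fT fS] by linarith
    hence "card T + card S \<le> m + card (T \<inter> S)" using un by linarith
    moreover have "card T * card B = card T + card T * card (B-{j})" by (simp only: cB mult_Suc_right)
    moreover have "snd c ! j - card S - (if ks then 1 else 0) + 1 \<ge> m + 1 - card S" using big cS by auto
    ultimately show ?thesis using a IH fst_new big cS by linarith
  qed
qed


lemma cfg_topple_top: "is_config m n c \<Longrightarrow> is_config m n (topple_top n i S c)"
  by (simp add: is_config_def topple_top_def)

lemma cfg_topple_bot: "is_config m n c \<Longrightarrow> is_config m n (topple_bot m j S ks c)"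
  by (simp add: is_config_def topple_bot_def)

lemma ssm_step_inv:
  assumes "ssm_step p m n c c'" "is_config m n c"
  shows "is_config m n c' \<and> (PP m n c \<longrightarrow> PP m n c')"
  using assms unfolding ssm_step_def
  by (auto intro: cfg_topple_top cfg_topple_bot PP_topple_top PP_topple_bot)

lemma ssm_star_cfg:
  assumes "(ssm_step p m n)\<^sup>*\<^sup>* c d" "is_config m n c"
  shows "is_config m n d"
  using assms by (induction rule: rtranclp_induct) (auto dest: ssm_step_inv)

lemma ssm_star_PP:
  assumes "(ssm_step p m n)\<^sup>*\<^sup>* c d" "is_config m n c" "PP m n c"
  shows "PP m n d"
  using assms
proof (induction rule: rtranclp_induct)
  case base then show ?case by simp
next
  case (step y z)
  have "is_config m n y" using step.hyps(1) step.prems(1) by (rule ssm_star_cfg)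
  then show ?case using ssm_step_inv[OF step.hyps(2)] step by blast
qed

lemma cfg_add_top: "is_config m n c \<Longrightarrow> is_config m n (add_top i c)"
  by (simp add: is_config_def add_top_def)

lemma cfg_add_bot: "is_config m n c \<Longrightarrow> is_config m n (add_bot j c)"
  by (simp add: is_config_def add_bot_def)

lemma PP_add_top:
  assumes P: "PP m n c" and cf: "is_config m n c" shows "PP m n (add_top i c)"
  unfolding PP_def
proof (intro allI impI)
  fix T B assume T: "T \<subseteq> {..<m}" and B: "B \<subseteq> {..<n}"
  have "(\<Sum>x\<in>T. fst c ! x) \<le> (\<Sum>x\<in>T. fst (add_top i c) ! x)"
  proof (rule sum_mono)
    fix x assume "x \<in> T" hence "x < length (fst c)" using T cf by (auto simp: is_config_def)
    then show "fst c ! x \<le> fst (add_top i c) ! x"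
      by (cases "x = i") (auto simp: add_top_def)
  qed
  moreover have eq: "snd (add_top i c) = snd c" by (simp add: add_top_def)
  ultimately show "card T * card B \<le> (\<Sum>x\<in>T. fst (add_top i c) ! x) + (\<Sum>y\<in>B. snd (add_top i c) ! y)"
    unfolding eq using PPD[OF P T B] by linarith
qed

lemma PP_add_bot:
  assumes P: "PP m n c" and cf: "is_config m n c" shows "PP m n (add_bot j c)"
  unfolding PP_def
proof (intro allI impI)
  fix T B assume T: "T \<subseteq> {..<m}" and B: "B \<subseteq> {..<n}"
  have "(\<Sum>x\<in>B. snd c ! x) \<le> (\<Sum>x\<in>B. snd (add_bot j c) ! x)"
  proof (rule sum_mono)
    fix x assume "x \<in> B" hence "x < length (snd c)" using B cf by (auto simp: is_config_def)
    then show "snd c ! x \<le> snd (add_bot j c) ! x"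
      by (cases "x = j") (auto simp: add_bot_def)
  qed
  moreover have eq: "fst (add_bot j c) = fst c" by (simp add: add_bot_def)
  ultimately show "card T * card B \<le> (\<Sum>x\<in>T. fst (add_bot j c) ! x) + (\<Sum>y\<in>B. snd (add_bot j c) ! y)"
    unfolding eq using PPD[OF P T B] by linarith
qed

lemma chain_step_inv:
  assumes "chain_step p m n c d"
  shows "is_config m n d \<and> stable m n d \<and> (PP m n c \<longrightarrow> PP m n d)"
proof -
  have cc: "is_config m n c" using assms by (simp add: chain_step_def)
  from assms consider i where "i < m" "ssm_stabilises_to p m n (add_top i c) d"
    | j where "j < n" "ssm_stabilises_to p m n (add_bot j c) d"
    unfolding chain_step_def by blast
  then show ?thesis
  proof cases
    case 1
    then show ?thesis using ssm_star_cfg[OF _ cfg_add_top[OF cc]] ssm_star_PP[OF _ cfg_add_top[OF cc] PP_add_top[OF _ cc]]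
      unfolding ssm_stabilises_to_def by blast
  next
    case 2
    then show ?thesis using ssm_star_cfg[OF _ cfg_add_bot[OF cc]] ssm_star_PP[OF _ cfg_add_bot[OF cc] PP_add_bot[OF _ cc]]
      unfolding ssm_stabilises_to_def by blast
  qed
qed

lemma chain_star_inv:
  assumes "(chain_step p m n)\<^sup>*\<^sup>* c d" "is_config m n c" "stable m n c"
  shows "is_config m n d \<and> stable m n d \<and> (PP m n c \<longrightarrow> PP m n d)"
  using assms by (induction rule: rtranclp_induct) (auto dest: chain_step_inv)


definition mes :: "nat \<Rightarrow> nat \<Rightarrow> config \<Rightarrow> config \<Rightarrow> nat" where
  "mes m n x y = (\<Sum>i<m. fst y ! i - fst x ! i) + (\<Sum>j<n. snd y ! j - snd x ! j)"

lemma chain_step_add_top: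
  assumes "is_config m n x" "stable m n x" "i < m" "stable m n (add_top i x)"
  shows "chain_step p m n x (add_top i x)"
  using assms unfolding chain_step_def ssm_stabilises_to_def by blast

lemma chain_step_add_bot:
  assumes "is_config m n x" "stable m n x" "j < n" "stable m n (add_bot j x)"
  shows "chain_step p m n x (add_bot j x)"
  using assms unfolding chain_step_def ssm_stabilises_to_def by blast

lemma mono_reach:
  assumes "is_config m n x" "stable m n x" "is_config m n y" "stable m n y"
    "\<forall>i<m. fst x ! i \<le> fst y ! i" "\<forall>j<n. snd x ! j \<le> snd y ! j"
  shows "(chain_step p m n)\<^sup>*\<^sup>* x y"
  using assms
proof (induction "mes m n x y" arbitrary: x rule: less_induct)
  case less
  note cx = less.prems(1) and sx = less.prems(2) and cy = less.prems(3) and sy = less.prems(4)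
    and le1 = less.prems(5) and le2 = less.prems(6)
  show ?case
  proof (cases "\<exists>i<m. fst x ! i < fst y ! i")
    case True
    then obtain i where i: "i < m" "fst x ! i < fst y ! i" by blast
    let ?x = "add_top i x"
    have li: "i < length (fst x)" using cx i by (simp add: is_config_def)
    have nth1: "\<And>i'. fst ?x ! i' = (if i' = i then fst x ! i + 1 else fst x ! i')"
      using li by (simp add: add_top_def nth_list_update)
    have cx': "is_config m n ?x" by (rule cfg_add_top[OF cx])
    have sx': "stable m n ?x" using sx sy i nth1 unfolding stable_def
      by (auto simp: add_top_def)
    have step: "chain_step p m n x ?x" by (rule chain_step_add_top[OF cx sx i(1) sx'])
    have "mes m n ?x y < mes m n x y"
    proof -
      have "(\<Sum>i'<m. fst y ! i' - fst ?x ! i') < (\<Sum>i'<m. fst y ! i' - fst x ! i')"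
        by (rule sum_strict_mono_ex1) (use i nth1 in auto)
      moreover have "snd ?x = snd x" by (simp add: add_top_def)
      ultimately show ?thesis unfolding mes_def by simp
    qed
    moreover have "\<forall>i'<m. fst ?x ! i' \<le> fst y ! i'" using le1 nth1 i by auto
    moreover have "\<forall>j<n. snd ?x ! j \<le> snd y ! j" using le2 by (simp add: add_top_def)
    ultimately have "(chain_step p m n)\<^sup>*\<^sup>* ?x y" using less.hyps cx' sx' cy sy by blast
    with step show ?thesis by (metis converse_rtranclp_into_rtranclp)
  next
    case F1: False
    show ?thesis
    proof (cases "\<exists>j<n. snd x ! j < snd y ! j")
      case True
      then obtain j where j: "j < n" "snd x ! j < snd y ! j" by blast
      let ?x = "add_bot j x"
      have lj: "j < length (snd x)" using cx j by (simp add: is_config_def)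
      have nth1: "\<And>j'. snd ?x ! j' = (if j' = j then snd x ! j + 1 else snd x ! j')"
        using lj by (simp add: add_bot_def nth_list_update)
      have cx': "is_config m n ?x" by (rule cfg_add_bot[OF cx])
      have sx': "stable m n ?x" using sx sy j nth1 unfolding stable_def
        by (auto simp: add_bot_def)
      have step: "chain_step p m n x ?x" by (rule chain_step_add_bot[OF cx sx j(1) sx'])
      have "mes m n ?x y < mes m n x y"
      proof -
        have "(\<Sum>j'<n. snd y ! j' - snd ?x ! j') < (\<Sum>j'<n. snd y ! j' - snd x ! j')"
          by (rule sum_strict_mono_ex1) (use j nth1 in auto)
        moreover have "fst ?x = fst x" by (simp add: add_bot_def)
        ultimately show ?thesis unfolding mes_def by simp
      qed
      moreover have "\<forall>j'<n. snd ?x ! j' \<le> snd y ! j'" using le2 nth1 j by auto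
      moreover have "\<forall>i<m. fst ?x ! i \<le> fst y ! i" using le1 by (simp add: add_bot_def)
      ultimately have "(chain_step p m n)\<^sup>*\<^sup>* ?x y" using less.hyps cx' sx' cy sy by blast
      with step show ?thesis by (metis converse_rtranclp_into_rtranclp)
    next
      case False
      have "fst x = fst y"
        by (rule nth_equalityI) (use cx cy le1 F1 in \<open>auto simp: is_config_def intro: antisym leI\<close>)
      moreover have "snd x = snd y"
        by (rule nth_equalityI) (use cx cy le2 False in \<open>auto simp: is_config_def intro: antisym leI\<close>)
      ultimately have "x = y" by (simp add: prod_eq_iff)
      then show ?thesis by simp
    qed
  qed
qed


lemma ppos: "0 < p \<Longrightarrow> p < 1 \<Longrightarrow> p ^ a * (1 - p) ^ b > (0::real)"
  by simp

lemma drain: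
  assumes p: "0 < p" "p < 1" and J: "finite J" "J \<subseteq> {..<n}"
  shows "is_config m n c \<Longrightarrow> (\<forall>j\<in>J. snd c ! j = m + 1) \<Longrightarrow>
    (ssm_step p m n)\<^sup>*\<^sup>* c (fst c, map (\<lambda>j. if j \<in> J then m else snd c ! j) [0..<n])"
  using J
proof (induction J arbitrary: c rule: finite_induct)
  case empty
  have "map (\<lambda>j. snd c ! j) [0..<n] = snd c"
    by (rule nth_equalityI) (use empty in \<open>auto simp: is_config_def\<close>)
  then show ?case by simp
next
  case (insert j J)
  let ?c = "topple_bot m j {} True c"
  have jn: "j < n" using insert by auto
  have lj: "j < length (snd c)" using insert jn by (simp add: is_config_def)
  have st: "ssm_step p m n c ?c"
    by (rule ssm_bot) (use jn insert.prems p in auto)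
  have fc: "fst ?c = fst c"
    by (rule nth_equalityI) (use insert.prems in \<open>auto simp: topple_bot_def is_config_def\<close>)
  have sc: "snd ?c = (snd c)[j := m]" using insert.prems by (simp add: topple_bot_def)
  have cc: "is_config m n ?c" using insert.prems(1) by (rule cfg_topple_bot)
  have "\<forall>j'\<in>J. snd ?c ! j' = m + 1" using insert sc by (auto simp: nth_upd)
  then have "(ssm_step p m n)\<^sup>*\<^sup>* ?c (fst ?c, map (\<lambda>j'. if j' \<in> J then m else snd ?c ! j') [0..<n])"
    using insert.IH insert.prems cc by auto
  moreover have "map (\<lambda>j'. if j' \<in> J then m else snd ?c ! j') [0..<n]
       = map (\<lambda>j'. if j' \<in> insert j J then m else snd c ! j') [0..<n]"
    using sc lj by (auto simp: nth_upd)
  ultimately show ?case using st fc by (metis converse_rtranclp_into_rtranclp)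
qed

lemma top_zero_step:
  assumes p: "0 < p" "p < 1" and n: "1 \<le> n" and cx: "is_config m n x" and sx: "stable m n x"
    and i: "i < m" and xi: "fst x ! i = n - 1" and bx: "\<forall>j<n. snd x ! j = m"
  shows "chain_step p m n x ((fst x)[i := 0], snd x)"
proof -
  have li: "i < length (fst x)" using cx i by (simp add: is_config_def)
  let ?a = "add_top i x"
  have a1: "fst ?a ! i = n" using li xi n by (simp add: add_top_def)
  let ?b = "topple_top n i {..<n} ?a"
  have st: "ssm_step p m n ?a ?b"
    by (rule ssm_top) (use i a1 p in auto)
  have fb: "fst ?b = (fst x)[i := 0]" using a1 by (simp add: topple_top_def add_top_def)
  have sb: "snd ?b = map (\<lambda>j. m + 1) [0..<n]"
    using bx by (simp add: topple_top_def add_top_def)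
  have cb: "is_config m n ?b" by (rule cfg_topple_top[OF cfg_add_top[OF cx]])
  have "(ssm_step p m n)\<^sup>*\<^sup>* ?b (fst ?b, map (\<lambda>j. if j \<in> {..<n} then m else snd ?b ! j) [0..<n])"
    by (rule drain[OF p]) (use cb sb in auto)
  moreover have "map (\<lambda>j. if j \<in> {..<n} then m else snd ?b ! j) [0..<n] = snd x"
    by (rule nth_equalityI) (use cx bx in \<open>auto simp: is_config_def\<close>)
  ultimately have "(ssm_step p m n)\<^sup>*\<^sup>* ?a ((fst x)[i := 0], snd x)"
    using st fb by (metis converse_rtranclp_into_rtranclp)
  moreover have "stable m n ((fst x)[i := 0], snd x)"
    using sx n unfolding stable_def by (auto simp: nth_upd)
  ultimately show ?thesis unfolding chain_step_def ssm_stabilises_to_def using cx sx i by blast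
qed

definition Mx :: "nat \<Rightarrow> nat \<Rightarrow> config" where
  "Mx m n = (replicate m (n - 1), replicate n m)"

lemma Mx_cfg: "is_config m n (Mx m n)" by (simp add: Mx_def is_config_def)
lemma Mx_stable: "1 \<le> n \<Longrightarrow> stable m n (Mx m n)" by (simp add: Mx_def stable_def)

lemma zero_tops:
  assumes p: "0 < p" "p < 1" and n: "1 \<le> n"
  shows "k \<le> m \<Longrightarrow> (chain_step p m n)\<^sup>*\<^sup>* (Mx m n)
     (map (\<lambda>i. if i < k then 0 else n - 1) [0..<m], replicate n m)"
proof (induction k)
  case 0
  have "map (\<lambda>i. if i < 0 then 0 else n - 1) [0..<m] = replicate m (n - 1)"
    by (rule nth_equalityI) auto
  then show ?case by (simp add: Mx_def)
next
  case (Suc k)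
  let ?x = "(map (\<lambda>i. if i < k then 0 else n - 1) [0..<m], replicate n m)"
  have cx: "is_config m n ?x" by (simp add: is_config_def)
  have sx: "stable m n ?x" using n by (auto simp: stable_def)
  have "chain_step p m n ?x ((fst ?x)[k := 0], snd ?x)"
    by (rule top_zero_step[OF p n cx sx]) (use Suc.prems in auto)
  moreover have "(fst ?x)[k := 0] = map (\<lambda>i. if i < Suc k then 0 else n - 1) [0..<m]"
    by (rule nth_equalityI) (auto simp: nth_upd)
  ultimately show ?case using Suc by (auto intro: rtranclp.rtrancl_into_rtrancl)
qed

lemma bot_step:
  assumes p: "0 < p" "p < 1" and cx: "is_config m n x" and sx: "stable m n x"
    and j: "j < n" and xj: "snd x ! j = m" and S: "S \<subseteq> {..<m}" and Sx: "\<forall>i\<in>S. fst x ! i + 1 < n"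
  shows "chain_step p m n x (map (\<lambda>i. fst x ! i + (if i \<in> S then 1 else 0)) [0..<m], (snd x)[j := m - card S])"
proof -
  have lj: "j < length (snd x)" using cx j by (simp add: is_config_def)
  let ?a = "add_bot j x"
  have a1: "snd ?a ! j = m + 1" using lj xj by (simp add: add_bot_def)
  let ?b = "topple_bot m j S True ?a"
  have st: "ssm_step p m n ?a ?b"
    by (rule ssm_bot) (use j a1 p S in auto)
  have eq: "?b = (map (\<lambda>i. fst x ! i + (if i \<in> S then 1 else 0)) [0..<m], (snd x)[j := m - card S])"
    using a1 by (simp add: topple_bot_def add_bot_def)
  have cS: "card S \<le> m" using S card_mono[of "{..<m}" S] by auto
  have "stable m n ?b" using sx Sx unfolding eq stable_def
    by (auto simp: nth_upd)
  then show ?thesis unfolding chain_step_def ssm_stabilises_to_def using cx sx j st eq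
    by (metis r_into_rtranclp)
qed


lemma card_lessSuc: "card {j. j < Suc k \<and> P j} = card {j. j < k \<and> P j} + (if P k then 1 else 0)"
proof (cases "P k")
  case True
  have "{j. j < Suc k \<and> P j} = insert k {j. j < k \<and> P j}" using True by auto
  then show ?thesis using True by simp
next
  case False
  have "{j. j < Suc k \<and> P j} = {j. j < k \<and> P j}" using False less_Suc_eq by auto
  then show ?thesis using False by simp
qed

lemma construct:
  assumes p: "0 < p" "p < 1" and n: "1 \<le> n"
    and lct: "length ct = m" and lcb: "length cb = n"
    and ctn: "\<forall>i<m. ct ! i < n" and cbm: "\<forall>j<n. cb ! j \<le> m"
    and col: "\<forall>j<n. card {i. i < m \<and> (i, j) \<in> E} = m - cb ! j"
    and row: "\<forall>i<m. card {j. j < n \<and> (i, j) \<in> E} \<le> ct ! i"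
  shows "(chain_step p m n)\<^sup>*\<^sup>* (Mx m n) (ct, cb)"
proof -
  define \<rho> where "\<rho> i = card {j. j < n \<and> (i, j) \<in> E}" for i
  define a where "a i = ct ! i - \<rho> i" for i
  define W where "W k = (map (\<lambda>i. a i + card {j. j < k \<and> (i, j) \<in> E}) [0..<m],
                         map (\<lambda>j. if j < k then cb ! j else m) [0..<n])" for k
  let ?Z = "(map (\<lambda>i. if i < m then 0 else n - 1) [0..<m], replicate n m)"
  have r1: "(chain_step p m n)\<^sup>*\<^sup>* (Mx m n) ?Z" by (rule zero_tops[OF p n]) simp
  have cfgW: "is_config m n (W k)" for k by (simp add: W_def is_config_def)
  have cardle: "card {j. j < k \<and> (i, j) \<in> E} \<le> \<rho> i" if "k \<le> n" for i k
    unfolding \<rho>_def by (rule card_mono) (use that in auto)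
  have aux: "a i + card {j. j < k \<and> (i, j) \<in> E} \<le> ct ! i" if "k \<le> n" "i < m" for i k
    using cardle[OF that(1), of i] row that(2) unfolding a_def \<rho>_def by auto
  have stW: "stable m n (W k)" if "k \<le> n" for k
    unfolding stable_def W_def using aux[OF that] ctn cbm
    by (auto simp: less_Suc_eq_le) (meson le_less_trans)
  have r2: "(chain_step p m n)\<^sup>*\<^sup>* ?Z (W 0)"
  proof (rule mono_reach)
    show "stable m n (W 0)" using stW by simp
    show "is_config m n (W 0)" by (rule cfgW)
  qed (use n in \<open>auto simp: is_config_def stable_def W_def\<close>)
  have r3: "k \<le> n \<Longrightarrow> (chain_step p m n)\<^sup>*\<^sup>* (W 0) (W k)" for k
  proof (induction k)
    case 0 then show ?case by simp
  next
    case (Suc k)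
    let ?S = "{i. i < m \<and> (i, k) \<in> E}"
    have kn: "k < n" using Suc.prems by simp
    have "chain_step p m n (W k) (map (\<lambda>i. fst (W k) ! i + (if i \<in> ?S then 1 else 0)) [0..<m],
           (snd (W k))[k := m - card ?S])"
    proof (rule bot_step[OF p cfgW stW])
      show "k \<le> n" using kn by simp
      show "k < n" by (rule kn)
      show "snd (W k) ! k = m" using kn by (simp add: W_def)
      show "?S \<subseteq> {..<m}" by auto
      show "\<forall>i\<in>?S. fst (W k) ! i + 1 < n"
      proof
        fix i assume iS: "i \<in> ?S"
        have "a i + card {j. j < Suc k \<and> (i, j) \<in> E} \<le> ct ! i" using aux[OF Suc.prems] iS by auto
        then have "a i + card {j. j < k \<and> (i, j) \<in> E} + 1 \<le> ct ! i"
          using iS by (simp add: card_lessSuc)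
        then show "fst (W k) ! i + 1 < n" using ctn iS by (auto simp: W_def)
      qed
    qed
    moreover have "(map (\<lambda>i. fst (W k) ! i + (if i \<in> ?S then 1 else 0)) [0..<m],
           (snd (W k))[k := m - card ?S]) = W (Suc k)"
    proof -
      have "map (\<lambda>i. fst (W k) ! i + (if i \<in> ?S then 1 else 0)) [0..<m] = fst (W (Suc k))"
        by (rule nth_equalityI) (auto simp: W_def card_lessSuc)
      moreover have "(snd (W k))[k := m - card ?S] = snd (W (Suc k))"
        by (rule nth_equalityI) (use kn col cbm in \<open>auto simp: W_def nth_upd less_Suc_eq\<close>)
      ultimately show ?thesis by (simp add: prod_eq_iff)
    qed
    ultimately show ?case using Suc by (metis Suc_leD rtranclp.rtrancl_into_rtrancl)
  qed
  have "W n = (ct, cb)"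
  proof -
    have "fst (W n) = ct"
      by (rule nth_equalityI) (use lct row in \<open>auto simp: W_def a_def \<rho>_def\<close>)
    moreover have "snd (W n) = cb"
      by (rule nth_equalityI) (use lcb in \<open>auto simp: W_def\<close>)
    ultimately show ?thesis by (simp add: prod_eq_iff)
  qed
  then show ?thesis using r1 r2 r3[of n] by (metis order_refl rtranclp_trans)
qed


definition mat_ok :: "nat \<Rightarrow> nat \<Rightarrow> nat list \<Rightarrow> nat list \<Rightarrow> (nat \<times> nat) set \<Rightarrow> bool" where
  "mat_ok m n ct F E \<longleftrightarrow> (\<forall>j<n. card {i. i < m \<and> (i, j) \<in> E} = m - F ! j) \<and>
      (\<forall>i<m. card {j. j < n \<and> (i, j) \<in> E} \<le> ct ! i)"

lemma same_cols:
  assumes ok: "mat_ok m n ct F E" and Gj: "\<forall>j<n. m - G ! j = m - F ! j"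
  shows "mat_ok m n ct G E"
  using ok Gj unfolding mat_ok_def by simp

lemma remove_one:
  assumes ok: "mat_ok m n ct F E" and r: "r < n" and Fr: "F ! r < m" and G: "m - G ! r = m - F ! r - 1"
    and Gj: "\<forall>j<n. j \<noteq> r \<longrightarrow> m - G ! j = m - F ! j"
  shows "\<exists>E'. mat_ok m n ct G E'"
proof -
  have c: "card {i. i < m \<and> (i, r) \<in> E} = m - F ! r" using ok r by (simp add: mat_ok_def)
  have "{i. i < m \<and> (i, r) \<in> E} \<noteq> {}"
  proof
    assume "{i. i < m \<and> (i, r) \<in> E} = {}"
    then have "card {i. i < m \<and> (i, r) \<in> E} = 0" by (simp only: card.empty)
    then show False using c Fr by linarith
  qed
  then obtain i0 where i0: "i0 < m" "(i0, r) \<in> E" by blast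
  let ?E = "E - {(i0, r)}"
  have "mat_ok m n ct G ?E"
    unfolding mat_ok_def
  proof (intro conjI allI impI)
    fix j assume j: "j < n"
    show "card {i. i < m \<and> (i, j) \<in> ?E} = m - G ! j"
    proof (cases "j = r")
      case True
      have "{i. i < m \<and> (i, j) \<in> ?E} = {i. i < m \<and> (i, r) \<in> E} - {i0}" using True by auto
      then show ?thesis using c True G i0 by simp
    next
      case False
      have "{i. i < m \<and> (i, j) \<in> ?E} = {i. i < m \<and> (i, j) \<in> E}" using False by auto
      then show ?thesis using ok j False Gj by (simp add: mat_ok_def)
    qed
  next
    fix i assume i: "i < m"
    have "card {j. j < n \<and> (i, j) \<in> ?E} \<le> card {j. j < n \<and> (i, j) \<in> E}"
      by (rule card_mono) auto
    moreover have "card {j. j < n \<and> (i, j) \<in> E} \<le> ct ! i" using ok i by (simp add: mat_ok_def)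
    ultimately show "card {j. j < n \<and> (i, j) \<in> ?E} \<le> ct ! i" by linarith
  qed
  then show ?thesis by blast
qed



lemma move_one:
  assumes ok: "mat_ok m n ct F E" and r: "r < n" and q: "q < n" and rq: "r \<noteq> q"
    and Fq: "F ! q \<le> m" "0 < F ! q" and Fr: "F ! r + 1 < F ! q"
    and G: "G ! r = F ! r + 1" "G ! q = F ! q - 1"
    and Gj: "\<forall>j<n. j \<noteq> r \<longrightarrow> j \<noteq> q \<longrightarrow> G ! j = F ! j"
  shows "\<exists>E'. mat_ok m n ct G E'"
proof -
  have cr: "card {i. i < m \<and> (i, r) \<in> E} = m - F ! r" using ok r by (simp add: mat_ok_def)
  have cq: "card {i. i < m \<and> (i, q) \<in> E} = m - F ! q" using ok q by (simp add: mat_ok_def)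
  have "\<not> {i. i < m \<and> (i, r) \<in> E} \<subseteq> {i. i < m \<and> (i, q) \<in> E}"
  proof
    assume "{i. i < m \<and> (i, r) \<in> E} \<subseteq> {i. i < m \<and> (i, q) \<in> E}"
    then have "card {i. i < m \<and> (i, r) \<in> E} \<le> card {i. i < m \<and> (i, q) \<in> E}"
      by (rule card_mono[rotated]) auto
    then show False using cr cq Fq Fr by linarith
  qed
  then obtain i0 where i0: "i0 < m" "(i0, r) \<in> E" "(i0, q) \<notin> E" by blast
  let ?E = "insert (i0, q) (E - {(i0, r)})"
  have "mat_ok m n ct G ?E"
    unfolding mat_ok_def
  proof (intro conjI allI impI)
    fix j assume j: "j < n"
    show "card {i. i < m \<and> (i, j) \<in> ?E} = m - G ! j"
    proof (cases "j = r")
      case True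
      have "{i. i < m \<and> (i, j) \<in> ?E} = {i. i < m \<and> (i, r) \<in> E} - {i0}" using True rq by auto
      then show ?thesis using cr True G i0 by simp
    next
      case F1: False
      show ?thesis
      proof (cases "j = q")
        case True
        have "{i. i < m \<and> (i, j) \<in> ?E} = insert i0 {i. i < m \<and> (i, q) \<in> E}" using True rq i0 by auto
        then show ?thesis using cq True G i0 Fq by simp
      next
        case False
        have "{i. i < m \<and> (i, j) \<in> ?E} = {i. i < m \<and> (i, j) \<in> E}" using False F1 by auto
        then show ?thesis using ok j False F1 Gj by (simp add: mat_ok_def)
      qed
    qed
  next
    fix i assume i: "i < m"
    have okr: "card {j. j < n \<and> (i, j) \<in> E} \<le> ct ! i" using ok i by (simp add: mat_ok_def)
    show "card {j. j < n \<and> (i, j) \<in> ?E} \<le> ct ! i"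
    proof (cases "i = i0")
      case True
      have e: "{j. j < n \<and> (i, j) \<in> ?E} = insert q ({j. j < n \<and> (i, j) \<in> E} - {r})"
        using True q rq by auto
      have rin: "r \<in> {j. j < n \<and> (i, j) \<in> E}" using True i0 r by auto
      have qn: "q \<notin> {j. j < n \<and> (i, j) \<in> E} - {r}" using True i0 by auto
      have fin: "finite {j. j < n \<and> (i, j) \<in> E}" by simp
      have "card (insert q ({j. j < n \<and> (i, j) \<in> E} - {r})) = Suc (card ({j. j < n \<and> (i, j) \<in> E} - {r}))"
        using qn fin by simp
      also have "\<dots> = card {j. j < n \<and> (i, j) \<in> E}" using card_Suc_Diff1[OF fin rin] .
      finally show ?thesis using e okr by simp
    next
      case False
      have "{j. j < n \<and> (i, j) \<in> ?E} = {j. j < n \<and> (i, j) \<in> E}" using False by auto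
      then show ?thesis using okr by simp
    qed
  qed
  then show ?thesis by blast
qed


lemma mat_step:
  assumes ok: "mat_ok m n ct F E" and lF: "length F = n" and lg: "legal_op op F"
  shows "\<exists>E'. mat_ok m n ct (apply_op op F) E'"
proof (cases op)
  case (Add q)
  have q: "q < n" using lg lF Add by simp
  let ?G = "apply_op op F"
  have G: "?G ! q = F ! q + 1" using q lF Add by simp
  have Gj: "\<forall>j<n. j \<noteq> q \<longrightarrow> m - ?G ! j = m - F ! j" using Add by simp
  show ?thesis
  proof (cases "F ! q < m")
    case True
    have "m - ?G ! q = m - F ! q - 1" using G by simp
    then show ?thesis using remove_one[OF ok q True _ Gj] by blast
  next
    case False
    have "\<forall>j<n. m - ?G ! j = m - F ! j" using Gj G False by auto
    then show ?thesis using same_cols[OF ok] by blast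
  qed
next
  case (Shift q r)
  let ?G = "apply_op op F"
  have q: "q < n" and rq: "r < q" and Fq0: "0 < F ! q" and sG: "sorted ?G"
    using lg lF Shift by auto
  have r: "r < n" using q rq by simp
  have G: "?G ! r = F ! r + 1" "?G ! q = F ! q - 1" using q r rq lF Shift by (auto simp: nth_upd)
  have Gj: "\<forall>j<n. j \<noteq> r \<longrightarrow> j \<noteq> q \<longrightarrow> ?G ! j = F ! j" using Shift by (auto simp: nth_upd)
  have lG: "length ?G = n" using lF Shift by simp
  have "?G ! r \<le> ?G ! q" using sG rq q lG by (simp add: sorted_iff_nth_mono)
  then have Frq: "F ! r + 1 < F ! q" using G Fq0 by linarith
  show ?thesis
  proof (cases "F ! q \<le> m")
    case True
    show ?thesis by (rule move_one[OF ok r q _ True Fq0 Frq G Gj]) (use rq in simp)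
  next
    case F2: False
    show ?thesis
    proof (cases "F ! r < m")
      case True
      have Gj': "\<forall>j<n. j \<noteq> r \<longrightarrow> m - ?G ! j = m - F ! j"
      proof (intro allI impI)
        fix j assume "j < n" "j \<noteq> r"
        then show "m - ?G ! j = m - F ! j" using Gj G F2 by (cases "j = q") auto
      qed
      have "m - ?G ! r = m - F ! r - 1" using G by simp
      then show ?thesis using remove_one[OF ok r True _ Gj'] by blast
    next
      case False
      have Gj': "\<forall>j<n. m - ?G ! j = m - F ! j"
      proof (intro allI impI)
        fix j assume "j < n"
        then show "m - ?G ! j = m - F ! j" using Gj G F2 False by (cases "j = q"; cases "j = r") auto
      qed
      then show ?thesis using same_cols[OF ok] by blast
    qed
  qed
qed

lemma length_apply_op: "length (apply_op op F) = length F"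
  by (cases op) auto

lemma mat_path:
  "ops_path F ops F' \<Longrightarrow> length F = n \<Longrightarrow> mat_ok m n ct F E \<Longrightarrow> \<exists>E'. mat_ok m n ct F' E'"
proof (induction ops arbitrary: F E)
  case Nil then show ?case by auto
next
  case (Cons op os)
  from Cons.prems have lg: "legal_op op F" and pth: "ops_path (apply_op op F) os F'" by auto
  obtain E1 where "mat_ok m n ct (apply_op op F) E1" using mat_step[OF Cons.prems(3) Cons.prems(2) lg] by blast
  then show ?case using Cons.IH[OF pth] Cons.prems(2) length_apply_op by metis
qed


lemma kvec_nth: "j < n \<Longrightarrow> kvec m n c ! j = card {i. i < m \<and> fst c ! i < Suc j}"
  by (simp add: kvec_def nth_upt del: upt_Suc)

lemma length_kvec: "length (kvec m n c) = n" by (simp add: kvec_def)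

lemma mat_base:
  assumes ctn: "\<forall>i<m. fst c ! i < n"
  shows "mat_ok m n (fst c) (kvec m n c) {(i, j). j < fst c ! i}"
  unfolding mat_ok_def
proof (intro conjI allI impI)
  fix j assume j: "j < n"
  have un: "{i. i < m \<and> fst c ! i < Suc j} \<union> {i. i < m \<and> (i, j) \<in> {(i, j). j < fst c ! i}} = {..<m}"
    by auto
  have int: "{i. i < m \<and> fst c ! i < Suc j} \<inter> {i. i < m \<and> (i, j) \<in> {(i, j). j < fst c ! i}} = {}"
    by auto
  have "card {i. i < m \<and> fst c ! i < Suc j} + card {i. i < m \<and> (i, j) \<in> {(i, j). j < fst c ! i}} = m"
    using card_Un_disjoint[of "{i. i < m \<and> fst c ! i < Suc j}" "{i. i < m \<and> (i, j) \<in> {(i, j). j < fst c ! i}}"]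
    un int by simp
  then show "card {i. i < m \<and> (i, j) \<in> {(i, j). j < fst c ! i}} = m - kvec m n c ! j"
    using kvec_nth[OF j] by simp
next
  fix i assume i: "i < m"
  have "card {j. j < n \<and> (i, j) \<in> {(i, j). j < fst c ! i}} \<le> card {..<fst c ! i}"
    by (rule card_mono) auto
  then show "card {j. j < n \<and> (i, j) \<in> {(i, j). j < fst c ! i}} \<le> fst c ! i" by simp
qed

lemma Mx_ge:
  assumes "is_config m n d" "stable m n d" "1 \<le> n"
  shows "(chain_step p m n)\<^sup>*\<^sup>* d (Mx m n)"
  by (rule mono_reach) (use assms in \<open>auto simp: Mx_def is_config_def stable_def less_Suc_eq_le\<close>)

lemma PP_Mx: "PP m n (Mx m n)"
  unfolding PP_def
proof (intro allI impI)
  fix T B assume T: "T \<subseteq> {..<m}" and B: "B \<subseteq> {..<n}"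
  have cT: "card T \<le> m" using card_mono[OF _ T] by simp
  have cB: "card B \<le> n" using card_mono[OF _ B] by simp
  have s1: "(\<Sum>i\<in>T. fst (Mx m n) ! i) = card T * (n - 1)"
    using T by (simp add: Mx_def subset_iff)
  have s2: "(\<Sum>j\<in>B. snd (Mx m n) ! j) = card B * m"
    using B by (simp add: Mx_def subset_iff)
  have "card T * card B \<le> card T * (n - 1) + card B * m"
  proof (cases "card B < n")
    case True
    then have "card T * card B \<le> card T * (n - 1)" by (intro mult_le_mono2) linarith
    then show ?thesis by linarith
  next
    case False
    then have "card B = n" using cB by simp
    then have "card T * card B \<le> card B * m" using cT by (simp add: mult.commute)
    then show ?thesis by linarith
  qed
  then show "card T * card B \<le> (\<Sum>i\<in>T. fst (Mx m n) ! i) + (\<Sum>j\<in>B. snd (Mx m n) ! j)"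
    using s1 s2 by simp
qed

lemma SR_of_reach:
  assumes "is_config m n c" "stable m n c" "1 \<le> n" "(chain_step p m n)\<^sup>*\<^sup>* (Mx m n) c"
  shows "stoch_recurrent p m n c"
  unfolding stoch_recurrent_def
proof (intro conjI allI impI)
  fix d assume "(chain_step p m n)\<^sup>*\<^sup>* c d"
  then have "is_config m n d" "stable m n d" using chain_star_inv assms by blast+
  then have "(chain_step p m n)\<^sup>*\<^sup>* d (Mx m n)" using Mx_ge assms(3) by blast
  then show "(chain_step p m n)\<^sup>*\<^sup>* d c" using assms(4) by (rule rtranclp_trans)
qed (use assms in auto)

lemma PP_of_SR:
  assumes "stoch_recurrent p m n c" "1 \<le> n"
  shows "PP m n c"
proof -
  have c: "is_config m n c" "stable m n c" using assms by (auto simp: stoch_recurrent_def)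
  have r: "(chain_step p m n)\<^sup>*\<^sup>* c (Mx m n)" using Mx_ge c assms(2) by blast
  have "(chain_step p m n)\<^sup>*\<^sup>* (Mx m n) c" using assms(1) r unfolding stoch_recurrent_def by blast
  then show ?thesis using chain_star_inv[of p m n "Mx m n" c] Mx_cfg Mx_stable[OF assms(2)] PP_Mx by blast
qed



definition psum :: "nat list \<Rightarrow> nat \<Rightarrow> int" where
  "psum F b = (\<Sum>j<b. int (F ! j))"

definition Dom :: "nat \<Rightarrow> nat list \<Rightarrow> nat list \<Rightarrow> bool" where
  "Dom n F F' \<longleftrightarrow> (\<forall>b\<le>n. psum F b \<le> psum F' b)"

definition Phi :: "nat \<Rightarrow> nat list \<Rightarrow> int" where
  "Phi n F = (\<Sum>b\<le>n. psum F b)"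

lemma psum_upd:
  assumes "k < length xs"
  shows "psum (xs[k := v]) b = psum xs b + (if k < b then int v - int (xs ! k) else 0)"
proof (cases "k < b")
  case True
  have "psum (xs[k := v]) b = int ((xs[k := v]) ! k) + (\<Sum>j\<in>{..<b} - {k}. int ((xs[k := v]) ! j))"
    unfolding psum_def using True by (simp add: sum.remove)
  also have "(\<Sum>j\<in>{..<b} - {k}. int ((xs[k := v]) ! j)) = (\<Sum>j\<in>{..<b} - {k}. int (xs ! j))"
    by (rule sum.cong) auto
  also have "psum xs b = int (xs ! k) + (\<Sum>j\<in>{..<b} - {k}. int (xs ! j))"
    unfolding psum_def using True by (simp add: sum.remove)
  ultimately show ?thesis using True assms by simp
next
  case False
  have "psum (xs[k := v]) b = psum xs b"
    unfolding psum_def by (rule sum.cong) (use False in auto)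
  then show ?thesis using False by simp
qed

lemma psum_mono_pw: "\<forall>j<b. F ! j \<le> F' ! j \<Longrightarrow> psum F b \<le> psum F' b"
  unfolding psum_def by (rule sum_mono) auto

lemma Phi_less:
  assumes "\<forall>b\<le>n. psum F b \<le> psum G b" "b0 \<le> n" "psum F b0 < psum G b0"
  shows "Phi n F < Phi n G"
  unfolding Phi_def by (rule sum_strict_mono_ex1) (use assms in auto)

lemma Phi_le: "Dom n F F' \<Longrightarrow> Phi n F \<le> Phi n F'"
  unfolding Phi_def Dom_def by (rule sum_mono) auto


lemma shift_step:
  assumes sF: "sorted F" and sF': "sorted F'" and lF: "length F = n" and lF': "length F' = n"
    and D: "Dom n F F'" and j0: "j0 < n" "F' ! j0 < F ! j0"
  shows "\<exists>op. legal_op op F \<and> Dom n (apply_op op F) F' \<and> Phi n F < Phi n (apply_op op F)"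
proof -
  define q where "q = (LEAST j. j < n \<and> F' ! j < F ! j)"
  have q: "q < n" "F' ! q < F ! q" unfolding q_def using LeastI[of "\<lambda>j. j < n \<and> F' ! j < F ! j" j0] j0 by auto
  have belowq: "F ! j \<le> F' ! j" if "j < q" for j
    using not_less_Least[of j "\<lambda>j. j < n \<and> F' ! j < F ! j"] that q unfolding q_def by auto
  have "psum F (Suc q) \<le> psum F' (Suc q)" using D q by (simp add: Dom_def)
  then have "psum F q + int (F ! q) \<le> psum F' q + int (F' ! q)" by (simp add: psum_def)
  then have lt: "psum F q < psum F' q" using q by linarith
  have ex: "\<exists>j<q. F ! j < F' ! j"
  proof (rule ccontr)
    assume "\<not> ?thesis"
    then have "\<forall>j<q. F' ! j \<le> F ! j" by auto
    then have "psum F' q \<le> psum F q" by (rule psum_mono_pw)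
    then show False using lt by simp
  qed
  define R where "R = {j. j < q \<and> F ! j < F' ! j}"
  define r where "r = Max R"
  have fR: "finite R" unfolding R_def by simp
  have neR: "R \<noteq> {}" using ex unfolding R_def by auto
  have r: "r < q" "F ! r < F' ! r" using Max_in[OF fR neR] unfolding r_def R_def by auto
  have mid: "F ! j = F' ! j" if "r < j" "j < q" for j
  proof -
    have "j \<notin> R" using Max_ge[OF fR, of j] that unfolding r_def by auto
    then show ?thesis using belowq[of j] that unfolding R_def by auto
  qed
  have rn: "r < n" using r q by simp
  let ?G = "(F[q := F ! q - 1])[r := F ! r + 1]"
  have aop: "apply_op (Shift q r) F = ?G" using r by (simp add: nth_upd)
  have Gn: "?G ! k = (if k = r then F ! r + 1 else if k = q then F ! q - 1 else F ! k)" if "k < n" for k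
    using that lF rn q r by (auto simp: nth_upd)
  have f1: "F ! r + 1 \<le> F ! q - 1"
  proof -
    have "F' ! r \<le> F' ! q" using sF' r q lF' by (simp add: sorted_iff_nth_mono)
    then show ?thesis using r q by linarith
  qed
  have Fmono: "F ! i \<le> F ! j" if "i \<le> j" "j < n" for i j using sF that lF by (simp add: sorted_iff_nth_mono)
  have F'mono: "F' ! i \<le> F' ! j" if "i \<le> j" "j < n" for i j using sF' that lF' by (simp add: sorted_iff_nth_mono)
  have sG: "sorted ?G"
    unfolding sorted_iff_nth_mono_less
  proof (intro allI impI)
    fix i j assume ij: "i < j" and jn: "j < length ?G"
    have jn': "j < n" using jn lF by simp
    have in': "i < n" using ij jn' by simp
    show "?G ! i \<le> ?G ! j"
    proof -
      have A: "F ! k \<le> F ! q - 1" if "k < q" "k \<noteq> r" for k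
      proof (cases "k < r")
        case True
        then have "F ! k \<le> F ! r" using Fmono rn by simp
        then show ?thesis using f1 by linarith
      next
        case False
        then have "r < k" using that by simp
        then have "F ! k = F' ! k" using mid that by simp
        moreover have "F' ! k \<le> F' ! q" using F'mono that q by simp
        ultimately show ?thesis using q by linarith
      qed
      have B: "F ! r + 1 \<le> F ! k" if "r < k" "k < n" "k \<noteq> q" for k
      proof (cases "k < q")
        case True
        then have "F ! k = F' ! k" using mid that by simp
        moreover have "F' ! r \<le> F' ! k" using F'mono that by simp
        ultimately show ?thesis using r by linarith
      next
        case False
        then have "F ! q \<le> F ! k" using Fmono that by simp
        then show ?thesis using f1 by linarith
      qed
      have C: "F ! q - 1 \<le> F ! k" if "q < k" "k < n" for k
        using Fmono[of q k] that by simp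
      have D1: "F ! k \<le> F ! r + 1" if "k < r" for k using Fmono[of k r] that rn by simp
      show ?thesis using Gn[OF in'] Gn[OF jn'] ij r A[of i] B[of j] C[of j] D1[of i] Fmono[of i j] jn' f1
        by (auto split: if_splits)
    qed
  qed
  have legal: "legal_op (Shift q r) F" using q r lF sG aop by simp
  have pG: "psum ?G b = psum F b + (if r < b then 1 else 0) - (if q < b then 1 else 0)" for b
  proof -
    have "psum ?G b = psum (F[q := F ! q - 1]) b + (if r < b then int (F ! r + 1) - int (F[q := F ! q - 1] ! r) else 0)"
      using psum_upd[of r "F[q := F ! q - 1]" "F ! r + 1" b] rn lF by simp
    also have "F[q := F ! q - 1] ! r = F ! r" using r by simp
    also have "psum (F[q := F ! q - 1]) b = psum F b + (if q < b then int (F ! q - 1) - int (F ! q) else 0)"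
      using psum_upd[of q F "F ! q - 1" b] q lF by simp
    finally show ?thesis using q by auto
  qed
  have DG: "Dom n ?G F'"
    unfolding Dom_def
  proof (intro allI impI)
    fix b assume b: "b \<le> n"
    show "psum ?G b \<le> psum F' b"
    proof (cases "r < b \<and> b \<le> q")
      case True
      have "psum F b < psum F' b"
        unfolding psum_def
        by (rule sum_strict_mono_ex1) (use True r belowq in \<open>auto intro!: bexI[of _ r]\<close>)
      then show ?thesis using pG[of b] True by auto
    next
      case False
      then show ?thesis using pG[of b] D b r by (auto simp: Dom_def)
    qed
  qed
  have "Phi n F < Phi n ?G"
  proof (rule Phi_less)
    show "\<forall>b\<le>n. psum F b \<le> psum ?G b" using pG r by auto
    show "q \<le> n" using q by simp
    show "psum F q < psum ?G q" using pG[of q] r by simp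
  qed
  then show ?thesis using legal DG aop by metis
qed


lemma add_step:
  assumes sF: "sorted F" and sF': "sorted F'" and lF: "length F = n" and lF': "length F' = n"
    and le: "\<forall>j<n. F ! j \<le> F' ! j" and ne: "F \<noteq> F'"
  shows "\<exists>op. legal_op op F \<and> Dom n (apply_op op F) F' \<and> Phi n F < Phi n (apply_op op F)"
proof -
  have ex: "\<exists>j<n. F ! j < F' ! j"
  proof (rule ccontr)
    assume "\<not> ?thesis"
    then have "\<forall>j<n. F ! j = F' ! j" using le by (auto intro: antisym leI)
    then have "F = F'" using lF lF' by (auto intro: nth_equalityI)
    then show False using ne by simp
  qed
  define R where "R = {j. j < n \<and> F ! j < F' ! j}"
  define q where "q = Max R"
  have fR: "finite R" unfolding R_def by simp
  have neR: "R \<noteq> {}" using ex unfolding R_def by auto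
  have q: "q < n" "F ! q < F' ! q" using Max_in[OF fR neR] unfolding q_def R_def by auto
  have above: "F ! j = F' ! j" if "q < j" "j < n" for j
  proof -
    have "j \<notin> R" using Max_ge[OF fR, of j] that unfolding q_def by auto
    then show ?thesis using le that unfolding R_def by (auto intro: antisym leI)
  qed
  let ?G = "F[q := F ! q + 1]"
  have aop: "apply_op (Add q) F = ?G" by simp
  have Gn: "?G ! k = (if k = q then F ! q + 1 else F ! k)" if "k < n" for k
    using that lF q by (auto simp: nth_upd)
  have Fmono: "F ! i \<le> F ! j" if "i \<le> j" "j < n" for i j using sF that lF by (simp add: sorted_iff_nth_mono)
  have F'mono: "F' ! i \<le> F' ! j" if "i \<le> j" "j < n" for i j using sF' that lF' by (simp add: sorted_iff_nth_mono)
  have sG: "sorted ?G"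
    unfolding sorted_iff_nth_mono_less
  proof (intro allI impI)
    fix i j assume ij: "i < j" and jn: "j < length ?G"
    have jn': "j < n" using jn lF by simp
    have in': "i < n" using ij jn' by simp
    have B: "F ! q + 1 \<le> F ! k" if "q < k" "k < n" for k
      using above[OF that] F'mono[of q k] that q by simp
    show "?G ! i \<le> ?G ! j"
      using Gn[OF in'] Gn[OF jn'] ij B[of j] Fmono[of i j] Fmono[of i q] jn' q
      by (auto split: if_splits)
  qed
  have legal: "legal_op (Add q) F" using q lF sG by simp
  have pG: "psum ?G b = psum F b + (if q < b then 1 else 0)" for b
    using psum_upd[of q F "F ! q + 1" b] q lF by simp
  have DG: "Dom n ?G F'"
    unfolding Dom_def
  proof (intro allI impI)
    fix b assume b: "b \<le> n"
    show "psum ?G b \<le> psum F' b"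
      by (rule psum_mono_pw) (use b Gn le q in auto)
  qed
  have "Phi n F < Phi n ?G"
    by (rule Phi_less[of n _ _ n]) (use pG q in auto)
  then show ?thesis using legal DG aop by metis
qed

lemma dom_ops:
  assumes "sorted F" "sorted F'" "length F = n" "length F' = n" "Dom n F F'"
  shows "\<exists>ops. ops_path F ops F'"
  using assms
proof (induction "nat (Phi n F' - Phi n F)" arbitrary: F rule: less_induct)
  case less
  show ?case
  proof (cases "F = F'")
    case True
    then have "ops_path F [] F'" by simp
    then show ?thesis by blast
  next
    case False
    have "\<exists>op. legal_op op F \<and> Dom n (apply_op op F) F' \<and> Phi n F < Phi n (apply_op op F)"
    proof (cases "\<exists>j<n. F' ! j < F ! j")
      case True
      then obtain j0 where "j0 < n" "F' ! j0 < F ! j0" by blast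
      then show ?thesis using shift_step less.prems by blast
    next
      case F2: False
      then have "\<forall>j<n. F ! j \<le> F' ! j" using not_less by blast
      then show ?thesis using add_step less.prems False by blast
    qed
    then obtain op where op: "legal_op op F" "Dom n (apply_op op F) F'" "Phi n F < Phi n (apply_op op F)"
      by blast
    have sG: "sorted (apply_op op F)" using op(1) by (cases op) auto
    have lG: "length (apply_op op F) = n" using less.prems length_apply_op by metis
    have "Phi n (apply_op op F) \<le> Phi n F'" using op(2) by (rule Phi_le)
    then have "nat (Phi n F' - Phi n (apply_op op F)) < nat (Phi n F' - Phi n F)" using op(3) by linarith
    then obtain ops where "ops_path (apply_op op F) ops F'"
      using less.hyps sG less.prems lG op(2) by blast
    then have "ops_path F (op # ops) F'" using op(1) by simp
    then show ?thesis by blast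
  qed
qed


lemma card_filter_sum: "card {i. i < (m::nat) \<and> P i} = (\<Sum>i<m. if P i then 1 else (0::nat))"
  by (induction m) (simp_all add: card_lessSuc)

lemma kvec_sum:
  assumes b: "b \<le> n"
  shows "(\<Sum>j<b. kvec m n c ! j) + (\<Sum>i\<in>{i. i < m \<and> fst c ! i < b}. fst c ! i)
         = card {i. i < m \<and> fst c ! i < b} * b"
proof -
  let ?T = "{i. i < m \<and> fst c ! i < b}"
  have "(\<Sum>j<b. kvec m n c ! j) = (\<Sum>j<b. \<Sum>i<m. if fst c ! i \<le> j then 1 else (0::nat))"
    by (rule sum.cong) (use b in \<open>auto simp: kvec_nth card_filter_sum less_Suc_eq_le\<close>)
  also have "\<dots> = (\<Sum>i<m. \<Sum>j<b. if fst c ! i \<le> j then 1 else (0::nat))" by (rule sum.swap)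
  also have "\<dots> = (\<Sum>i<m. b - fst c ! i)"
  proof (rule sum.cong)
    fix i
    have "(\<Sum>j<b. if fst c ! i \<le> j then 1 else (0::nat)) = card {j. j < b \<and> fst c ! i \<le> j}"
      by (simp add: card_filter_sum)
    also have "{j. j < b \<and> fst c ! i \<le> j} = {fst c ! i..<b}" by auto
    finally show "(\<Sum>j<b. if fst c ! i \<le> j then 1 else (0::nat)) = b - fst c ! i" by simp
  qed simp
  also have "\<dots> = (\<Sum>i\<in>?T. b - fst c ! i)"
    by (rule sum.mono_neutral_right) auto
  finally have e: "(\<Sum>j<b. kvec m n c ! j) = (\<Sum>i\<in>?T. b - fst c ! i)" .
  have "(\<Sum>i\<in>?T. b - fst c ! i) + (\<Sum>i\<in>?T. fst c ! i) = (\<Sum>i\<in>?T. b)"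
    by (subst sum.distrib[symmetric]) (rule sum.cong, auto)
  then show ?thesis using e by simp
qed

lemma PP_Dom:
  assumes P: "PP m n c" and cf: "is_config m n c"
  shows "Dom n (kvec m n c) (snd c)"
  unfolding Dom_def
proof (intro allI impI)
  fix b assume b: "b \<le> n"
  let ?T = "{i. i < m \<and> fst c ! i < b}"
  have "card ?T * card {..<b} \<le> (\<Sum>i\<in>?T. fst c ! i) + (\<Sum>j\<in>{..<b}. snd c ! j)"
    by (rule PPD[OF P]) (use b in auto)
  then have "(\<Sum>j<b. kvec m n c ! j) \<le> (\<Sum>j<b. snd c ! j)" using kvec_sum[OF b, of m c] by simp
  then have "int (\<Sum>j<b. kvec m n c ! j) \<le> int (\<Sum>j<b. snd c ! j)" by (simp only: of_nat_le_iff)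
  then show "psum (kvec m n c) b \<le> psum (snd c) b" unfolding psum_def of_nat_sum .
qed



lemma cnt:
  fixes xs :: "nat list"
  assumes s: "sorted xs" and i: "i < length xs"
  shows "card {i'. i' < length xs \<and> xs ! i' \<le> v} \<le> i \<longleftrightarrow> v < xs ! i"
proof
  assume a: "v < xs ! i"
  have "{i'. i' < length xs \<and> xs ! i' \<le> v} \<subseteq> {..<i}"
  proof
    fix i' assume "i' \<in> {i'. i' < length xs \<and> xs ! i' \<le> v}"
    then have i': "i' < length xs" "xs ! i' \<le> v" by auto
    show "i' \<in> {..<i}"
    proof (rule ccontr)
      assume "i' \<notin> {..<i}"
      then have "i \<le> i'" by simp
      then have "xs ! i \<le> xs ! i'" using s i'(1) by (simp add: sorted_iff_nth_mono)
      then show False using a i'(2) by linarith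
    qed
  qed
  then have "card {i'. i' < length xs \<and> xs ! i' \<le> v} \<le> card {..<i}"
    by (rule card_mono[rotated]) simp
  then show "card {i'. i' < length xs \<and> xs ! i' \<le> v} \<le> i" by simp
next
  assume a: "card {i'. i' < length xs \<and> xs ! i' \<le> v} \<le> i"
  show "v < xs ! i"
  proof (rule ccontr)
    assume na: "\<not> v < xs ! i"
    have "{..i} \<subseteq> {i'. i' < length xs \<and> xs ! i' \<le> v}"
    proof
      fix i' assume "i' \<in> {..i}"
      then have "i' \<le> i" by simp
      then have "xs ! i' \<le> xs ! i" "i' < length xs" using s i by (auto simp: sorted_iff_nth_mono)
      then show "i' \<in> {i'. i' < length xs \<and> xs ! i' \<le> v}" using na by simp
    qed
    then have "card {..i} \<le> card {i'. i' < length xs \<and> xs ! i' \<le> v}"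
      by (rule card_mono[rotated]) simp
    then show False using a by simp
  qed
qed

lemma ct_from_kvec:
  assumes s: "sorted (fst c)" and l: "length (fst c) = m" and st: "\<forall>i<m. fst c ! i < n" and i: "i < m"
  shows "fst c ! i = card {j. j < n \<and> kvec m n c ! j \<le> i}"
proof -
  have "{j. j < n \<and> kvec m n c ! j \<le> i} = {..<fst c ! i}"
  proof -
    have "kvec m n c ! j \<le> i \<longleftrightarrow> j < fst c ! i" if "j < n" for j
    proof -
      have "kvec m n c ! j = card {i'. i' < length (fst c) \<and> fst c ! i' \<le> j}"
        using that l by (simp add: kvec_nth less_Suc_eq_le)
      then show ?thesis using cnt[OF s, of i j] i l by simp
    qed
    then show ?thesis using st i by auto
  qed
  then show ?thesis by simp
qed

lemma sorted_kvec: "sorted (kvec m n c)"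
  unfolding sorted_iff_nth_mono
proof (intro allI impI)
  fix i j assume "i \<le> j" "j < length (kvec m n c)"
  then show "kvec m n c ! i \<le> kvec m n c ! j"
    by (simp add: kvec_nth length_kvec) (rule card_mono, auto)
qed

lemma last_kvec:
  assumes "1 \<le> n" "stable m n c"
  shows "last (kvec m n c) = m"
proof -
  have ne: "kvec m n c \<noteq> []" using assms length_kvec[of m n c] by auto
  have "last (kvec m n c) = kvec m n c ! (n - 1)"
    using last_conv_nth[OF ne] by (simp add: length_kvec)
  also have "\<dots> = card {i. i < m \<and> fst c ! i < n}" using assms kvec_nth[of "n - 1" n m c] by simp
  also have "{i. i < m \<and> fst c ! i < n} = {..<m}" using assms by (auto simp: stable_def)
  finally show ?thesis by simp
qed

lemma ops_area:
  "ops_path F ops F' \<Longrightarrow> int (num_adds ops) = int (sum_list F') - int (sum_list F)"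
proof (induction ops arbitrary: F)
  case Nil then show ?case by (simp add: num_adds_def)
next
  case (Cons op os)
  from Cons.prems have lg: "legal_op op F" and pth: "ops_path (apply_op op F) os F'" by auto
  have IH: "int (num_adds os) = int (sum_list F') - int (sum_list (apply_op op F))" by (rule Cons.IH[OF pth])
  show ?case
  proof (cases op)
    case (Add q)
    have q: "q < length F" using lg Add by simp
    have "sum_list (apply_op op F) = sum_list F + (F ! q + 1) - F ! q"
      using Add q by (simp add: sum_list_update)
    then have "sum_list (apply_op op F) = sum_list F + 1" by simp
    then show ?thesis using IH Add by (simp add: num_adds_def)
  next
    case (Shift q r)
    have q: "q < length F" and rq: "r < q" and F0: "0 < F ! q" using lg Shift by auto
    have le: "F ! q \<le> sum_list F" using q by (rule elem_le_sum_list)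
    let ?F1 = "F[q := F ! q - 1]"
    have s1: "sum_list ?F1 = sum_list F + (F ! q - 1) - F ! q" using q by (simp add: sum_list_update)
    have r1: "r < length ?F1" using q rq by simp
    have s2: "sum_list (?F1[r := ?F1 ! r + 1]) = sum_list ?F1 + (?F1 ! r + 1) - ?F1 ! r"
      using r1 by (rule sum_list_update)
    have "sum_list (apply_op op F) = sum_list F" using Shift s1 s2 le F0 by simp
    then show ?thesis using IH Shift by (simp add: num_adds_def)
  qed
qed



lemma surj_part:
  assumes p: "0 < p" "p < 1" and n: "1 \<le> n"
    and F: "F \<in> Ferrers_eq m n" and F': "F' \<in> Ferrers_le m n" and cp: "compatible F F'"
  shows "\<exists>c. is_config m n c \<and> sorted_config c \<and> stoch_recurrent p m n c \<and> Psi m n c = (F, F')"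
proof -
  have lF: "length F = n" and sF: "sorted F" and lastF: "last F = m" using F by (auto simp: Ferrers_eq_def)
  have lF': "length F' = n" and sF': "sorted F'" and lastF': "last F' \<le> m" using F' by (auto simp: Ferrers_le_def)
  obtain ops where ops: "ops_path F ops F'" using cp by (auto simp: compatible_def)
  have Fn1: "F ! (n - 1) = m" using lastF lF n by (metis last_conv_nth list.size(3) not_one_le_zero)
  have F'n1: "F' ! (n - 1) \<le> m" using lastF' lF' n by (metis last_conv_nth list.size(3) not_one_le_zero)
  have Fle: "F ! j \<le> m" if "j < n" for j
    using sF lF that Fn1 by (metis diff_less le_less_trans less_one not_less sorted_iff_nth_mono zero_less_one n le_imp_less_Suc Suc_diff_1 less_Suc_eq_le)
  have F'le: "F' ! j \<le> m" if "j < n" for j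
  proof -
    have "F' ! j \<le> F' ! (n - 1)" using sF' lF' that by (simp add: sorted_iff_nth_mono)
    then show ?thesis using F'n1 by simp
  qed
  define ct where "ct = map (\<lambda>i. card {j. j < n \<and> F ! j \<le> i}) [0..<m]"
  define c where "c = (ct, F')"
  have lct: "length ct = m" by (simp add: ct_def)
  have ctn: "ct ! i < n" if "i < m" for i
  proof -
    have "{j. j < n \<and> F ! j \<le> i} \<subseteq> {..<n - 1}"
    proof
      fix j assume "j \<in> {j. j < n \<and> F ! j \<le> i}"
      then have "j < n" "F ! j \<le> i" by auto
      moreover have "j \<noteq> n - 1" using Fn1 that \<open>F ! j \<le> i\<close> by auto
      ultimately show "j \<in> {..<n - 1}" by simp
    qed
    then have "card {j. j < n \<and> F ! j \<le> i} \<le> n - 1" using card_mono[of "{..<n - 1}"] by fastforce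
    then show ?thesis using that n by (simp add: ct_def)
  qed
  have sct: "sorted ct"
    unfolding sorted_iff_nth_mono
  proof (intro allI impI)
    fix i j assume "i \<le> j" "j < length ct"
    then show "ct ! i \<le> ct ! j" by (simp add: ct_def lct) (rule card_mono, auto)
  qed
  have cfg: "is_config m n c" using lct lF' by (simp add: c_def is_config_def)
  have stc: "stable m n c" using ctn F'le by (auto simp: c_def stable_def less_Suc_eq_le)
  have soc: "sorted_config c" using sct sF' by (simp add: c_def sorted_config_def)
  have kv: "kvec m n c = F"
  proof (rule nth_equalityI)
    show "length (kvec m n c) = length F" using lF by (simp add: length_kvec)
  next
    fix j assume "j < length (kvec m n c)"
    then have j: "j < n" by (simp add: length_kvec)
    have "{i. i < m \<and> fst c ! i < Suc j} = {..<F ! j}"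
    proof -
      have "fst c ! i < Suc j \<longleftrightarrow> i < F ! j" if "i < m" for i
      proof -
        have "fst c ! i = card {j'. j' < length F \<and> F ! j' \<le> i}" using that lF by (simp add: c_def ct_def)
        then show ?thesis using cnt[OF sF, of j i] j lF by (simp add: less_Suc_eq_le)
      qed
      then show ?thesis using Fle[OF j] by auto
    qed
    then show "kvec m n c ! j = F ! j" using j by (simp add: kvec_nth)
  qed
  have "mat_ok m n (fst c) (kvec m n c) {(i, j). j < fst c ! i}"
    by (rule mat_base) (use ctn in \<open>simp add: c_def\<close>)
  then have "mat_ok m n ct F {(i, j). j < fst c ! i}" using kv by (simp add: c_def)
  then have "\<exists>E. mat_ok m n ct F' E" by (rule mat_path[OF ops lF])
  then obtain E where E: "mat_ok m n ct F' E" by blast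
  have "(chain_step p m n)\<^sup>*\<^sup>* (Mx m n) (ct, F')"
    by (rule construct[OF p n lct lF' _ _ _ _, of E]) (use ctn F'le E in \<open>auto simp: mat_ok_def\<close>)
  then have sr: "stoch_recurrent p m n c" using SR_of_reach[OF cfg stc n] by (simp add: c_def)
  have "Psi m n c = (F, F')" using kv by (simp add: Psi_def c_def)
  then show ?thesis using cfg soc sr by blast
qed


lemma into_part:
  assumes n: "1 \<le> n" and c: "is_config m n c" "sorted_config c" "stoch_recurrent p m n c"
  shows "kvec m n c \<in> Ferrers_eq m n \<and> snd c \<in> Ferrers_le m n \<and> compatible (kvec m n c) (snd c)"
proof -
  have st: "stable m n c" using c by (simp add: stoch_recurrent_def)
  have ls: "length (snd c) = n" using c by (simp add: is_config_def)
  have ss: "sorted (snd c)" using c by (simp add: sorted_config_def)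
  have k: "kvec m n c \<in> Ferrers_eq m n"
    using last_kvec[OF n st] sorted_kvec length_kvec by (simp add: Ferrers_eq_def)
  have ne: "snd c \<noteq> []" using ls n by auto
  have "last (snd c) = snd c ! (n - 1)" using last_conv_nth[OF ne] ls by simp
  also have "\<dots> \<le> m"
  proof -
    have "n - 1 < n" using n by simp
    then have "snd c ! (n - 1) < m + 1" using st unfolding stable_def by blast
    then show ?thesis by simp
  qed
  finally have b: "snd c \<in> Ferrers_le m n" using ls ss by (simp add: Ferrers_le_def)
  have "PP m n c" using PP_of_SR[OF c(3) n] .
  then have "Dom n (kvec m n c) (snd c)" using PP_Dom c(1) by blast
  then have "\<exists>ops. ops_path (kvec m n c) ops (snd c)"
    using dom_ops[OF sorted_kvec ss length_kvec ls] by blast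
  then show ?thesis using k b by (simp add: compatible_def)
qed

lemma level_eq:
  assumes c: "is_config m n c" "stable m n c"
  shows "level m n c = int (area (snd c)) - int (area (kvec m n c))"
proof -
  have T: "{i. i < m \<and> fst c ! i < n} = {..<m}" using c by (auto simp: stable_def)
  have "(\<Sum>j<n. kvec m n c ! j) + (\<Sum>i\<in>{i. i < m \<and> fst c ! i < n}. fst c ! i)
         = card {i. i < m \<and> fst c ! i < n} * n" by (rule kvec_sum) simp
  then have e: "(\<Sum>j<n. kvec m n c ! j) + (\<Sum>i<m. fst c ! i) = m * n" unfolding T by simp
  have a1: "area (kvec m n c) = (\<Sum>j<n. kvec m n c ! j)"
    by (simp add: area_def sum_list_sum_nth length_kvec atLeast0LessThan)
  have a2: "sum_list (fst c) = (\<Sum>i<m. fst c ! i)"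
    using c by (simp add: sum_list_sum_nth is_config_def atLeast0LessThan)
  have e2: "int (sum_list (kvec m n c)) + int (sum_list (fst c)) = int (m * n)"
    using e a1 a2 unfolding area_def by (metis of_nat_add)
  show ?thesis unfolding level_def area_def using e2 by linarith
qed

theorem theorem3p2:
  fixes p :: real and m n :: nat
  assumes "0 < p" and "p < 1" and "1 \<le> n"
  shows "bij_betw (Psi m n)
           {c. is_config m n c \<and> sorted_config c \<and> stoch_recurrent p m n c}
           {(F, F'). F \<in> Ferrers_eq m n \<and> F' \<in> Ferrers_le m n \<and> compatible F F'}
       \<and> (\<forall>c. is_config m n c \<and> sorted_config c \<and> stoch_recurrent p m n c \<longrightarrow>
            level m n c = int (area (snd c)) - int (area (kvec m n c)) \<and>
            (\<forall>ops. ops_path (kvec m n c) ops (snd c) \<longrightarrow>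
                   int (num_adds ops) = level m n c))"
proof (intro conjI allI impI)
  let ?D = "{c. is_config m n c \<and> sorted_config c \<and> stoch_recurrent p m n c}"
  let ?T = "{(F, F'). F \<in> Ferrers_eq m n \<and> F' \<in> Ferrers_le m n \<and> compatible F F'}"
  have inj: "inj_on (Psi m n) ?D"
  proof (rule inj_onI)
    fix c1 c2 assume c1: "c1 \<in> ?D" and c2: "c2 \<in> ?D" and eq: "Psi m n c1 = Psi m n c2"
    have k: "kvec m n c1 = kvec m n c2" and s: "snd c1 = snd c2" using eq by (auto simp: Psi_def)
    have props: "sorted (fst c) \<and> length (fst c) = m \<and> (\<forall>i<m. fst c ! i < n)" if "c \<in> ?D" for c
      using that by (auto simp: sorted_config_def is_config_def stoch_recurrent_def stable_def)
    have "fst c1 = fst c2"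
    proof (rule nth_equalityI)
      show "length (fst c1) = length (fst c2)" using props[OF c1] props[OF c2] by simp
    next
      fix i assume "i < length (fst c1)"
      then have i: "i < m" using props[OF c1] by simp
      show "fst c1 ! i = fst c2 ! i"
        using ct_from_kvec[of c1 m n i] ct_from_kvec[of c2 m n i] props[OF c1] props[OF c2] i k by simp
    qed
    then show "c1 = c2" using s by (simp add: prod_eq_iff)
  qed
  have img: "Psi m n ` ?D = ?T"
  proof
    show "Psi m n ` ?D \<subseteq> ?T"
      using into_part[OF assms(3)] by (auto simp: Psi_def)
  next
    show "?T \<subseteq> Psi m n ` ?D"
    proof
      fix x assume "x \<in> ?T"
      then obtain F F' where x: "x = (F, F')" "F \<in> Ferrers_eq m n" "F' \<in> Ferrers_le m n" "compatible F F'"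
        by blast
      obtain c where "is_config m n c \<and> sorted_config c \<and> stoch_recurrent p m n c \<and> Psi m n c = (F, F')"
        using surj_part[OF assms x(2) x(3) x(4)] by blast
      then show "x \<in> Psi m n ` ?D" using x(1) by force
    qed
  qed
  show "bij_betw (Psi m n) ?D ?T" using inj img by (simp add: bij_betw_def)
next
  fix c assume c: "is_config m n c \<and> sorted_config c \<and> stoch_recurrent p m n c"
  then show "level m n c = int (area (snd c)) - int (area (kvec m n c))"
    using level_eq by (auto simp: stoch_recurrent_def)
next
  fix c ops assume c: "is_config m n c \<and> sorted_config c \<and> stoch_recurrent p m n c"
    and o: "ops_path (kvec m n c) ops (snd c)"
  have "level m n c = int (area (snd c)) - int (area (kvec m n c))"
    using c level_eq by (auto simp: stoch_recurrent_def)
  then show "int (num_adds ops) = level m n c" using ops_area[OF o] by (simp add: area_def)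
qed


end
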